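(* Let $g$ be a principal solution of a system $T$. Then the rank of $g$ equals the cardinality of ${\rm alp}(g)$. Moreover, if $h=\vartheta\circ g$ for a morphism $\vartheta$, then the rank of $h$ is at most the rank of $g$.
   Context: A solution of a system $T$ of word equations is a morphism $h$ from ${\rm alp}(T)^*$ (the unknowns of $T$) to a free monoid with $h(u)=h(v)$ for all $(u,v)\in T$; ${\rm alp}(h)$ is the set of letters occurring in images $h(x)$. For $h:\{x_1,\dots,x_n\}^*\to\{a_1,\dots,a_k\}^*$, $\gamma(h)_i=(|h(x_1)|_{a_i},\dots,|h(x_n)|_{a_i})\in\mathbb Q^n$, and the rank of $h$ is the dimension of the $\mathbb Q$-span of $\gamma(h)_1,\dots,\gamma(h)_k$. A solution $h'$ divides a solution $h$ if $h=\vartheta\circ h'$ with $\vartheta$ non-erasing and defined on ${\rm alp}(h')$; a solution $g$ is principal if whenever $g=\vartheta\circ h'$ for a solution $h'$ and non-erasing $\vartheta$, $\vartheta$ is a renaming of letters. *)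

theory Defs
  imports Complex_Main "HOL-Library.Function_Algebras"
begin

text \<open>Morphisms from the unknowns to a free monoid are functions 'x => 'a list,
  extended to words by concatenation; only their values on alp(T) matter.\<close>

type_synonym ('x) word_system = "('x list \<times> 'x list) set"

definition alpT :: "'x word_system \<Rightarrow> 'x set" where
  "alpT T = (\<Union>(u, v)\<in>T. set u \<union> set v)"

definition morph :: "('x \<Rightarrow> 'a list) \<Rightarrow> 'x list \<Rightarrow> 'a list" where
  "morph h w = concat (map h w)"

definition is_solution :: "'x word_system \<Rightarrow> ('x \<Rightarrow> 'a list) \<Rightarrow> bool" where
  "is_solution T h \<longleftrightarrow> (\<forall>(u, v)\<in>T. morph h u = morph h v)"

definition alph :: "'x word_system \<Rightarrow> ('x \<Rightarrow> 'a list) \<Rightarrow> 'a set" where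
  "alph T h = (\<Union>x\<in>alpT T. set (h x))"

text \<open>gamma(h)_a : the Parikh column of letter a, as a rational vector indexed by the
  unknowns of T (coordinates outside alp(T) are 0).\<close>
definition gamma :: "'x word_system \<Rightarrow> ('x \<Rightarrow> 'a list) \<Rightarrow> 'a \<Rightarrow> ('x \<Rightarrow> rat)" where
  "gamma T h a = (\<lambda>x. if x \<in> alpT T then of_nat (count_list (h x) a) else 0)"

definition qscale :: "rat \<Rightarrow> ('x \<Rightarrow> rat) \<Rightarrow> ('x \<Rightarrow> rat)" where
  "qscale c f = (\<lambda>x. c * f x)"

definition rank :: "'x word_system \<Rightarrow> ('x \<Rightarrow> 'a list) \<Rightarrow> nat" where
  "rank T h = vector_space.dim qscale (range (gamma T h))"

definition nonerasing_on :: "'a set \<Rightarrow> ('a \<Rightarrow> 'b list) \<Rightarrow> bool" where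
  "nonerasing_on A \<theta> \<longleftrightarrow> (\<forall>c\<in>A. \<theta> c \<noteq> [])"

definition renaming_on :: "'a set \<Rightarrow> ('a \<Rightarrow> 'b list) \<Rightarrow> bool" where
  "renaming_on A \<theta> \<longleftrightarrow> (\<exists>f. inj_on f A \<and> (\<forall>c\<in>A. \<theta> c = [f c]))"

text \<open>Principal solution. The dividing solutions h' range over morphisms into nat*
  (a countably infinite alphabet; every solution has a finite alphabet, hence is a
  renaming of one into nat*).\<close>
definition principal :: "'x word_system \<Rightarrow> ('x \<Rightarrow> 'a list) \<Rightarrow> bool" where
  "principal T g \<longleftrightarrow> is_solution T g \<and>
     (\<forall>(h' :: 'x \<Rightarrow> nat list) (\<theta> :: nat \<Rightarrow> 'a list).
        is_solution T h' \<and> nonerasing_on (alph T h') \<theta> \<and>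
        (\<forall>x\<in>alpT T. g x = morph \<theta> (h' x))
        \<longrightarrow> renaming_on (alph T h') \<theta>)"

end

theory Submission
  imports Defs
begin

lemma vs_qscale: "vector_space (qscale :: rat \<Rightarrow> ('x \<Rightarrow> rat) \<Rightarrow> ('x \<Rightarrow> rat))"
  by unfold_locales (auto simp: qscale_def fun_eq_iff algebra_simps)

interpretation Q: vector_space "qscale :: rat \<Rightarrow> ('x \<Rightarrow> rat) \<Rightarrow> ('x \<Rightarrow> rat)"
  by (rule vs_qscale)

lemma sum_fun_apply: "(\<Sum>i\<in>S. f i) x = (\<Sum>i\<in>S. (f i) x)"
  by (induction S rule: infinite_finite_induct) auto

definition code :: "'a list set \<Rightarrow> bool" where
  "code Z \<longleftrightarrow> (\<forall>xs ys. set xs \<subseteq> Z \<longrightarrow> set ys \<subseteq> Z \<longrightarrow> concat xs = concat ys \<longrightarrow> xs = ys)"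

lemma noncode_step:
  assumes "xs \<noteq> ys" "concat xs = concat ys" "[] \<notin> set xs" "[] \<notin> set ys"
  shows "\<exists>u w. u \<in> set xs \<union> set ys \<and> u @ w \<in> set xs \<union> set ys \<and> w \<noteq> []"
  using assms
proof (induction xs arbitrary: ys)
  case Nil
  then show ?case by (cases ys) auto
next
  case (Cons x xs)
  then obtain y ys' where ys: "ys = y # ys'" by (cases ys) auto
  show ?case
  proof (cases "x = y")
    case True
    with Cons.prems ys have "xs \<noteq> ys'" "concat xs = concat ys'" by auto
    with Cons.IH[of ys'] Cons.prems ys show ?thesis by auto
  next
    case False
    from Cons.prems ys have "x @ concat xs = y @ concat ys'" by simp
    then obtain us where "(x = y @ us \<and> us @ concat xs = concat ys') \<or> (x @ us = y \<and> concat xs = us @ concat ys')"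
      by (auto simp: append_eq_append_conv2)
    then show ?thesis
    proof
      assume "x = y @ us \<and> us @ concat xs = concat ys'"
      with False show ?thesis using ys by (intro exI[of _ y] exI[of _ us]) auto
    next
      assume "x @ us = y \<and> concat xs = us @ concat ys'"
      with False show ?thesis using ys by (intro exI[of _ x] exI[of _ us]) auto
    qed
  qed
qed

lemma code_exists:
  fixes L :: "'a list \<Rightarrow> rat"
  assumes add: "\<And>u v. L (u @ v) = L u + L v"
  shows "finite Z \<Longrightarrow> [] \<notin> Z \<Longrightarrow> (\<forall>z\<in>Z. L z = 0) \<Longrightarrow>
    \<exists>Z'. finite Z' \<and> [] \<notin> Z' \<and> (\<forall>z\<in>Z'. L z = 0) \<and> code Z' \<and>
         (\<forall>z\<in>Z. \<exists>xs. set xs \<subseteq> Z' \<and> concat xs = z)"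
proof (induction "sum length Z" arbitrary: Z rule: less_induct)
  case less
  show ?case
  proof (cases "code Z")
    case True
    then show ?thesis using less.prems
      by (intro exI[of _ Z]) (auto intro!: exI[of _ "[_]"])
  next
    case False
    then obtain xs ys where xy: "set xs \<subseteq> Z" "set ys \<subseteq> Z" "concat xs = concat ys" "xs \<noteq> ys"
      unfolding code_def by blast
    with less.prems obtain u w where uw: "u \<in> Z" "u @ w \<in> Z" "w \<noteq> []"
      using noncode_step[of xs ys] by blast
    have un: "u \<noteq> []" using uw less.prems by auto
    define Z1 where "Z1 = insert w (Z - {u @ w})"
    have fin: "finite Z1" using less.prems by (simp add: Z1_def)
    have "sum length Z1 \<le> length w + sum length (Z - {u @ w})"
      unfolding Z1_def using less.prems by (simp add: sum.insert_if)
    also have "sum length (Z - {u @ w}) = sum length Z - length (u @ w)"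
      using less.prems uw by (simp add: sum_diff1_nat)
    finally have le1: "sum length Z1 \<le> length w + (sum length Z - length (u @ w))" .
    have "length (u @ w) \<le> sum length Z"
      using less.prems uw by (intro member_le_sum) auto
    moreover have "length u > 0" using un by simp
    ultimately have lt: "sum length Z1 < sum length Z" using le1 unfolding length_append by linarith
    have l0: "\<forall>z\<in>Z1. L z = 0"
      using less.prems uw add[of u w] by (auto simp: Z1_def)
    have ne: "[] \<notin> Z1" using less.prems uw by (auto simp: Z1_def)
    obtain Z' where Z': "finite Z'" "[] \<notin> Z'" "\<forall>z\<in>Z'. L z = 0" "code Z'"
      "\<forall>z\<in>Z1. \<exists>xs. set xs \<subseteq> Z' \<and> concat xs = z"
      using less.hyps[OF lt fin ne l0] by blast
    have "\<forall>z\<in>Z. \<exists>xs. set xs \<subseteq> Z' \<and> concat xs = z"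
    proof
      fix z assume z: "z \<in> Z"
      show "\<exists>xs. set xs \<subseteq> Z' \<and> concat xs = z"
      proof (cases "z = u @ w")
        case False
        with z Z'(5) show ?thesis by (auto simp: Z1_def)
      next
        case True
        have "u \<in> Z1" using uw by (auto simp: Z1_def)
        moreover have "w \<in> Z1" by (simp add: Z1_def)
        ultimately obtain xs1 xs2 where "set xs1 \<subseteq> Z'" "concat xs1 = u" "set xs2 \<subseteq> Z'" "concat xs2 = w"
          using Z'(5) by meson
        then show ?thesis using True by (intro exI[of _ "xs1 @ xs2"]) auto
      qed
    qed
    with Z' show ?thesis by blast
  qed
qed


lemma count_morph:
  assumes "finite A" "set w \<subseteq> A"
  shows "count_list (concat (map \<theta> w)) b = (\<Sum>a\<in>A. count_list w a * count_list (\<theta> a) b)"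
  using assms(2)
proof (induction w)
  case Nil then show ?case by simp
next
  case (Cons x w)
  have "(\<Sum>a\<in>A. count_list (x # w) a * count_list (\<theta> a) b)
      = (\<Sum>a\<in>A. (if x = a then count_list (\<theta> a) b else 0) + count_list w a * count_list (\<theta> a) b)"
    by (rule sum.cong) (auto simp: algebra_simps)
  also have "\<dots> = count_list (\<theta> x) b + (\<Sum>a\<in>A. count_list w a * count_list (\<theta> a) b)"
    using Cons.prems assms(1) by (simp add: sum.distrib)
  finally show ?case using Cons by simp
qed

lemma finite_alph: "finite (alpT T) \<Longrightarrow> finite (alph T g)"
  by (auto simp: alph_def)

lemma dep_coeffs:
  fixes G :: "'a \<Rightarrow> ('x \<Rightarrow> rat)"
  assumes finA: "finite A" and nd: "\<not> (inj_on G A \<and> Q.independent (G ` A))"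
  shows "\<exists>c a0. a0 \<in> A \<and> c a0 \<noteq> 0 \<and> (\<Sum>a\<in>A. qscale (c a) (G a)) = 0"
proof (cases "inj_on G A")
  case False
  then obtain a b where ab: "a \<in> A" "b \<in> A" "a \<noteq> b" "G a = G b"
    unfolding inj_on_def by blast
  define c where "c d = (if d = a then 1 else if d = b then -1 else (0::rat))" for d
  have "(\<Sum>d\<in>A. qscale (c d) (G d)) = (\<Sum>d\<in>{a,b}. qscale (c d) (G d))"
    by (rule sum.mono_neutral_right) (use finA ab in \<open>auto simp: c_def qscale_def fun_eq_iff\<close>)
  also have "\<dots> = 0" using ab by (simp add: c_def qscale_def fun_eq_iff)
  finally show ?thesis using ab by (intro exI[of _ c] exI[of _ a]) (auto simp: c_def)
next
  case True
  with nd have "Q.dependent (G ` A)" by blast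
  then obtain t u where tu: "finite t" "t \<subseteq> G ` A" "(\<Sum>v\<in>t. qscale (u v) v) = 0" "\<exists>v\<in>t. u v \<noteq> 0"
    unfolding Q.dependent_explicit by blast
  then obtain v0 where v0: "v0 \<in> t" "u v0 \<noteq> 0" by blast
  then obtain a0 where a0: "a0 \<in> A" "G a0 = v0" using tu(2) by blast
  define c where "c a = (if G a \<in> t then u (G a) else 0)" for a
  define B where "B = {a\<in>A. G a \<in> t}"
  have "(\<Sum>a\<in>A. qscale (c a) (G a)) = (\<Sum>a\<in>B. qscale (c a) (G a))"
    by (rule sum.mono_neutral_right) (use finA in \<open>auto simp: c_def qscale_def fun_eq_iff B_def\<close>)
  also have "\<dots> = (\<Sum>a\<in>B. qscale (u (G a)) (G a))"
    by (rule sum.cong) (auto simp: B_def c_def)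
  also have "\<dots> = (\<Sum>v\<in>G ` B. qscale (u v) v)"
    using True by (subst sum.reindex) (auto simp: B_def inj_on_def)
  also have "G ` B = t" using tu(2) by (auto simp: B_def)
  finally show ?thesis using tu(3) a0 v0 by (intro exI[of _ c] exI[of _ a0]) (auto simp: c_def)
qed


lemma principal_indep:
  fixes T :: "'x word_system" and g :: "'x \<Rightarrow> 'a list"
  assumes finT: "finite (alpT T)" and pr: "principal T g"
    and a0: "a0 \<in> alph T g" and ca0: "c a0 \<noteq> 0"
    and H: "\<forall>x\<in>alpT T. (\<Sum>a\<in>alph T g. c a * of_nat (count_list (g x) a)) = (0::rat)"
  shows False
proof -
  define A where "A = alph T g"
  have finA: "finite A" using finT by (simp add: A_def finite_alph)
  define L where "L w = (\<Sum>a\<in>A. c a * of_nat (count_list w a))" for w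
  have add: "L (u @ v) = L u + L v" for u v
    by (simp add: L_def sum.distrib distrib_left)
  define Z0 where "Z0 = g ` alpT T - {[]}"
  have "finite Z0" "[] \<notin> Z0" "\<forall>z\<in>Z0. L z = 0"
    using finT H by (auto simp: Z0_def L_def A_def)
  then obtain Z' where Z': "finite Z'" "[] \<notin> Z'" "\<forall>z\<in>Z'. L z = 0" "code Z'"
      "\<forall>z\<in>Z0. \<exists>xs. set xs \<subseteq> Z' \<and> concat xs = z"
    using code_exists[of L Z0, OF add] by blast
  have "\<exists>(n::nat) f. Z' = f ` {i. i < n} \<and> inj_on f {i. i < n}"
    by (rule finite_imp_nat_seg_image_inj_on[OF Z'(1)])
  then obtain n :: nat and f where nf0: "Z' = f ` {i. i < n} \<and> inj_on f {i. i < n}"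
    by blast
  have nf: "Z' = f ` {i. i < n}" "inj_on f {i. i < n}" using nf0 by simp_all
  define e where "e = inv_into {i. i < n} f"
  define \<theta> where "\<theta> i = (if i < n then f i else [])" for i
  have eZ: "e z < n" "f (e z) = z" "\<theta> (e z) = z" if "z \<in> Z'" for z
  proof -
    have zi: "z \<in> f ` {i. i < n}" using that nf(1) by simp
    show "e z < n" using inv_into_into[OF zi] unfolding e_def by simp
    show "f (e z) = z" using f_inv_into_f[OF zi] unfolding e_def .
    then show "\<theta> (e z) = z" using \<open>e z < n\<close> unfolding \<theta>_def by simp
  qed
  have exfac: "\<exists>xs. set xs \<subseteq> Z' \<and> concat xs = g x" if "x \<in> alpT T" for x
  proof (cases "g x = []")
    case True then show ?thesis by (intro exI[of _ "[]"]) auto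
  next
    case False then show ?thesis using Z'(5) that by (auto simp: Z0_def)
  qed
  define fac where "fac x = (SOME xs. set xs \<subseteq> Z' \<and> concat xs = g x)" for x
  have fac: "set (fac x) \<subseteq> Z' \<and> concat (fac x) = g x" if "x \<in> alpT T" for x
    unfolding fac_def by (rule someI_ex[OF exfac[OF that]])
  define h' where "h' x = (if x \<in> alpT T then map e (fac x) else [])" for x
  have mth: "morph \<theta> (h' x) = g x" if "x \<in> alpT T" for x
  proof -
    have "map (\<theta> \<circ> e) (fac x) = fac x"
      by (rule map_idI) (use fac[OF that] eZ in auto)
    then show ?thesis using fac[OF that] that by (simp add: morph_def h'_def)
  qed
  have facs: "set (concat (map fac u)) \<subseteq> Z' \<and> concat (concat (map fac u)) = morph g u
     \<and> morph h' u = map e (concat (map fac u))" if "set u \<subseteq> alpT T" for u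
    using that fac by (induction u) (auto simp: morph_def h'_def)
  have sol: "is_solution T h'"
    unfolding is_solution_def
  proof (intro ballI, clarify)
    fix u v assume uv: "(u, v) \<in> T"
    then have su: "set u \<subseteq> alpT T" "set v \<subseteq> alpT T" by (auto simp: alpT_def)
    have "is_solution T g" using pr by (simp add: principal_def)
    then have "morph g u = morph g v" using uv unfolding is_solution_def by blast
    moreover have "set (concat (map fac u)) \<subseteq> Z'" "set (concat (map fac v)) \<subseteq> Z'"
      using facs[OF su(1)] facs[OF su(2)] by auto
    ultimately have "concat (map fac u) = concat (map fac v)"
      using Z'(4) facs[OF su(1)] facs[OF su(2)] unfolding code_def by simp
    then show "morph h' u = morph h' v" using facs[OF su(1)] facs[OF su(2)] by simp
  qed
  have alph_h: "\<exists>z\<in>Z'. i = e z" if "i \<in> alph T h'" for i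
    using that fac by (auto simp: alph_def h'_def)
  have ne: "nonerasing_on (alph T h') \<theta>"
    unfolding nonerasing_on_def using alph_h eZ Z'(2) by fastforce
  have "\<forall>(h'::'x \<Rightarrow> nat list) (\<theta> :: nat \<Rightarrow> 'a list).
        is_solution T h' \<and> nonerasing_on (alph T h') \<theta> \<and>
        (\<forall>x\<in>alpT T. g x = morph \<theta> (h' x))
        \<longrightarrow> renaming_on (alph T h') \<theta>" using pr unfolding principal_def by simp
  then have "renaming_on (alph T h') \<theta>"
    using sol ne mth by simp
  then obtain F where F: "\<And>i. i \<in> alph T h' \<Longrightarrow> \<theta> i = [F i]"
    unfolding renaming_on_def by blast
  from a0 obtain x where x: "x \<in> alpT T" "a0 \<in> set (g x)" by (auto simp: alph_def)
  then have "a0 \<in> set (concat (fac x))" using fac[OF x(1)] by simp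
  then obtain z where z: "z \<in> set (fac x)" "a0 \<in> set z" by auto
  have zZ: "z \<in> Z'" using z fac[OF x(1)] by auto
  have "e z \<in> alph T h'" using x z by (auto simp: alph_def h'_def)
  then have "z = [F (e z)]" using F eZ(3)[OF zZ] by metis
  then obtain b where zb: "z = [b]" by blast
  then have "z = [a0]" using z(2) by simp
  have "(\<Sum>a\<in>A. c a * of_nat (count_list [a0] a)) = (\<Sum>a\<in>A. if a0 = a then c a else 0)"
    by (rule sum.cong) auto
  also have "\<dots> = c a0" using a0 finA by (simp add: A_def)
  finally have "L z = c a0" using \<open>z = [a0]\<close> by (simp add: L_def)
  then show False using Z'(3) zZ ca0 by simp
qed


theorem lemma2p2:
  fixes T :: "'x word_system" and g :: "'x \<Rightarrow> 'a list"
  assumes "finite (alpT T)"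
    and "principal T g"
  shows "rank T g = card (alph T g) \<and>
         (\<forall>(\<theta> :: 'a \<Rightarrow> 'b list) (h :: 'x \<Rightarrow> 'b list).
            (\<forall>x\<in>alpT T. h x = morph \<theta> (g x)) \<longrightarrow> rank T h \<le> rank T g)"
proof -
  note finT = assms(1) and pr = assms(2)
  define A where "A = alph T g"
  define G where "G = gamma T g"
  have finA: "finite A" using finT by (simp add: A_def finite_alph)
  have gA: "set (g x) \<subseteq> A" if "x \<in> alpT T" for x
    using that by (auto simp: A_def alph_def)
  have G0: "G a = 0" if "a \<notin> A" for a
    using that gA by (fastforce simp: G_def gamma_def fun_eq_iff count_list_0_iff)
  have rsp: "range G \<subseteq> Q.span (G ` A)"
  proof
    fix v assume "v \<in> range G"
    then obtain a where v: "v = G a" by blast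
    show "v \<in> Q.span (G ` A)"
    proof (cases "a \<in> A")
      case True then show ?thesis using v by (intro Q.span_base) auto
    next
      case False then show ?thesis using v G0 Q.span_zero by simp
    qed
  qed
  have leA: "Q.dim V \<le> card A" if "V \<subseteq> Q.span (G ` A)" for V
  proof -
    have "Q.dim V \<le> card (G ` A)" using Q.dim_le_card[OF that] finA by simp
    also have "\<dots> \<le> card A" using finA by (rule card_image_le)
    finally show ?thesis .
  qed
  have indep: "inj_on G A \<and> Q.independent (G ` A)"
  proof (rule ccontr)
    assume "\<not> (inj_on G A \<and> Q.independent (G ` A))"
    then obtain c a0 where ca: "a0 \<in> A" "c a0 \<noteq> 0" "(\<Sum>a\<in>A. qscale (c a) (G a)) = 0"
      using dep_coeffs[OF finA] by blast
    have H: "\<forall>x\<in>alpT T. (\<Sum>a\<in>alph T g. c a * of_nat (count_list (g x) a)) = (0::rat)"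
    proof
      fix x assume x: "x \<in> alpT T"
      have "(\<Sum>a\<in>A. qscale (c a) (G a)) x = 0" using ca(3) by simp
      then show "(\<Sum>a\<in>alph T g. c a * of_nat (count_list (g x) a)) = (0::rat)"
        using x by (simp add: sum_fun_apply qscale_def G_def gamma_def A_def)
    qed
    show False using principal_indep[OF finT pr _ _ H] ca by (simp add: A_def)
  qed
  have eq: "rank T g = card A"
  proof -
    have "card (G ` A) = Q.dim (range G)"
      by (rule Q.basis_card_eq_dim) (use rsp indep in auto)
    moreover have "card (G ` A) = card A" using indep by (simp add: card_image)
    ultimately show ?thesis by (simp add: rank_def G_def)
  qed
  have part2: "rank T h \<le> rank T g" if hyp: "\<forall>x\<in>alpT T. h x = morph \<theta> (g x)"
    for \<theta> :: "'a \<Rightarrow> 'b list" and h :: "'x \<Rightarrow> 'b list"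
  proof -
    have gh: "gamma T h b = (\<Sum>a\<in>A. qscale (of_nat (count_list (\<theta> a) b)) (G a))" for b
    proof
      fix x
      show "gamma T h b x = (\<Sum>a\<in>A. qscale (of_nat (count_list (\<theta> a) b)) (G a)) x"
      proof (cases "x \<in> alpT T")
        case True
        have "count_list (h x) b = (\<Sum>a\<in>A. count_list (g x) a * count_list (\<theta> a) b)"
          using hyp True count_morph[OF finA gA[OF True]] by (simp add: morph_def)
        then show ?thesis using True
          by (simp add: gamma_def sum_fun_apply qscale_def G_def mult.commute)
      next
        case False then show ?thesis
          by (simp add: gamma_def sum_fun_apply qscale_def G_def)
      qed
    qed
    have "range (gamma T h) \<subseteq> Q.span (G ` A)"
    proof
      fix v assume "v \<in> range (gamma T h)"
      then obtain b where v: "v = gamma T h b" by blast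
      show "v \<in> Q.span (G ` A)" unfolding v gh
        by (intro Q.span_sum Q.span_scale Q.span_base) auto
    qed
    then have "rank T h \<le> card A" using leA by (simp add: rank_def)
    then show ?thesis using eq by simp
  qed
  show ?thesis
  proof (intro conjI allI impI)
    show "rank T g = card (alph T g)" using eq by (simp add: A_def)
  next
    fix \<theta> :: "'a \<Rightarrow> 'b list" and h :: "'x \<Rightarrow> 'b list"
    assume "\<forall>x\<in>alpT T. h x = morph \<theta> (g x)"
    then show "rank T h \<le> rank T g" by (rule part2)
  qed
qed

end
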